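(* Let $\rho$ be an irreducible representation of $\mathcal U=U_h^{2,q}(\mathbb{F}_{q^2})$ in which $H_{2(h-1)}$ acts via a character $\psi$ of conductor $q^2$ (i.e. $1+a\tau^{2(h-1)}$ acts by $\psi(a)$). Then $\rho$ is uniquely determined up to isomorphism by its restriction to $H$: if $\rho'$ is another such irreducible representation with $\rho'|_H\cong\rho|_H$, then $\rho'\cong\rho$.
   Context: Let $p$ be a prime, $q$ a power of $p$, $\ell\ne p$, and $h\ge2$ an integer; representations are over $\overline{\mathbb{Q}}_\ell$. For a commutative $\mathbb{F}_q$-algebra $A$, $U_h^{2,q}(A)$ is the set of formal expressions $1+\sum_{i=1}^{2(h-1)}a_i\tau^i$ ($a_i\in A$) with multiplication obtained by extending $(a\tau^i)(b\tau^j)=ab^{q^i}\tau^{i+j}$ bi-additively, where $\tau^0=1$ and $\tau^k=0$ for $k>2(h-1)$. In $\mathcal U=U_h^{2,q}(\mathbb{F}_{q^2})$ let $H=\{1+\sum a_i\tau^i: a_i=0\text{ for all odd }i\}$ and $H_{2(h-1)}=\{1+a\tau^{2(h-1)}: a\in\mathbb{F}_{q^2}\}$. An additive character $\psi\colon\mathbb{F}_{q^2}\to\overline{\mathbb{Q}}_\ell^\times$ has conductor $q^2$ if there exists $x$ with $\psi(x^q)\ne\psi(x)$. *)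

theory Defs
  imports "Jordan_Normal_Form.Matrix"
begin

(* The group U_h^{2,q}(F_{q^2}).  An element 1 + sum_{i=1}^{N} a_i tau^i, N = 2(h-1),
   is encoded by its coefficient function a :: nat => 'f with a 0 = 1 and a i = 0 for i > N. *)

definition U_N :: "nat \<Rightarrow> nat" where
  "U_N h = 2 * (h - 1)"

definition U_carrier :: "nat \<Rightarrow> (nat \<Rightarrow> 'f::field) set" where
  "U_carrier h = {a. a 0 = 1 \<and> (\<forall>i. U_N h < i \<longrightarrow> a i = 0)}"

(* (a tau^i)(b tau^j) = a b^{q^i} tau^{i+j}, extended bi-additively, truncated above N *)
definition U_mult :: "nat \<Rightarrow> nat \<Rightarrow> (nat \<Rightarrow> 'f::field) \<Rightarrow> (nat \<Rightarrow> 'f) \<Rightarrow> (nat \<Rightarrow> 'f)" where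
  "U_mult q h a b = (\<lambda>k. if k \<le> U_N h then (\<Sum>i=0..k. a i * (b (k - i)) ^ (q ^ i)) else 0)"

definition U_one :: "nat \<Rightarrow> 'f::field" where
  "U_one = (\<lambda>i. if i = 0 then 1 else 0)"

definition U_H :: "nat \<Rightarrow> (nat \<Rightarrow> 'f::field) set" where
  "U_H h = {a \<in> U_carrier h. \<forall>i. odd i \<longrightarrow> a i = 0}"

definition U_top :: "nat \<Rightarrow> 'f \<Rightarrow> (nat \<Rightarrow> 'f::field)" where
  "U_top h x = (\<lambda>i. if i = 0 then 1 else if i = U_N h then x else 0)"

definition is_rep :: "'g set \<Rightarrow> ('g \<Rightarrow> 'g \<Rightarrow> 'g) \<Rightarrow> 'g \<Rightarrow> nat \<Rightarrow> ('g \<Rightarrow> complex mat) \<Rightarrow> bool" where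
  "is_rep G mul e n \<rho> \<longleftrightarrow>
     (\<forall>g\<in>G. \<rho> g \<in> carrier_mat n n) \<and>
     (\<forall>g\<in>G. \<forall>g'\<in>G. \<rho> (mul g g') = \<rho> g * \<rho> g') \<and>
     \<rho> e = 1\<^sub>m n"

definition invariant_subspace :: "'g set \<Rightarrow> nat \<Rightarrow> ('g \<Rightarrow> complex mat) \<Rightarrow> complex vec set \<Rightarrow> bool" where
  "invariant_subspace G n \<rho> W \<longleftrightarrow>
     W \<subseteq> carrier_vec n \<and> 0\<^sub>v n \<in> W \<and>
     (\<forall>v\<in>W. \<forall>w\<in>W. v + w \<in> W) \<and>
     (\<forall>c. \<forall>v\<in>W. c \<cdot>\<^sub>v v \<in> W) \<and>
     (\<forall>g\<in>G. \<forall>v\<in>W. \<rho> g *\<^sub>v v \<in> W)"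

definition irreducible_rep :: "'g set \<Rightarrow> ('g \<Rightarrow> 'g \<Rightarrow> 'g) \<Rightarrow> 'g \<Rightarrow> nat \<Rightarrow> ('g \<Rightarrow> complex mat) \<Rightarrow> bool" where
  "irreducible_rep G mul e n \<rho> \<longleftrightarrow>
     is_rep G mul e n \<rho> \<and> 0 < n \<and>
     (\<forall>W. invariant_subspace G n \<rho> W \<longrightarrow> W = {0\<^sub>v n} \<or> W = carrier_vec n)"

definition rep_iso_on :: "'g set \<Rightarrow> nat \<Rightarrow> ('g \<Rightarrow> complex mat) \<Rightarrow> nat \<Rightarrow> ('g \<Rightarrow> complex mat) \<Rightarrow> bool" where
  "rep_iso_on S n \<rho> n' \<rho>' \<longleftrightarrow> n = n' \<and>
     (\<exists>P \<in> carrier_mat n n. invertible_mat P \<and> (\<forall>g\<in>S. P * \<rho> g = \<rho>' g * P))"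

definition additive_char :: "('f::field \<Rightarrow> complex) \<Rightarrow> bool" where
  "additive_char \<psi> \<longleftrightarrow> (\<forall>x y. \<psi> (x + y) = \<psi> x * \<psi> y) \<and> (\<forall>x. \<psi> x \<noteq> 0)"

end

theory Submission
  imports Defs "Jordan_Normal_Form.Char_Poly"
begin

lemma pow_card:
  fixes x :: "'f::{field,finite}"
  shows "x ^ card (UNIV::'f set) = x"
proof (cases "x = 0")
  case True thus ?thesis by (simp add: zero_power finite_UNIV_card_ge_0)
next
  case False
  let ?S = "UNIV - {0::'f}"
  have bij: "bij_betw (\<lambda>y. x * y) ?S ?S"
    using False by (auto simp: bij_betw_def inj_on_def intro!: image_eqI[where x="y / x" for y])
  have "(\<Prod>y\<in>?S. x * y) = (\<Prod>y\<in>?S. y)"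
    using prod.reindex_bij_betw[OF bij, of "\<lambda>y. y"] by simp
  moreover have "(\<Prod>y\<in>?S. x * y) = x ^ card ?S * (\<Prod>y\<in>?S. y)"
    by (simp add: prod.distrib)
  moreover have "(\<Prod>y\<in>?S. y) \<noteq> 0" by simp
  ultimately have "x ^ card ?S = 1" by simp
  moreover have "card ?S = card (UNIV::'f set) - 1" by (simp add: card_Diff_singleton)
  moreover have "card (UNIV::'f set) \<ge> 1" using finite_UNIV_card_ge_0[where 'a='f] by (simp add: Suc_leI)
  ultimately have "x ^ (card (UNIV::'f set) - 1) = 1" by simp
  moreover obtain m where m: "card (UNIV::'f set) = Suc m"
    using finite_UNIV_card_ge_0[where 'a='f] by (metis Suc_pred finite)
  ultimately show ?thesis by simp
qed
lemma frob_pow: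
  fixes x :: "'f::field"
  assumes fq: "\<forall>y::'f. y ^ (q^2) = y"
  shows "x ^ (q ^ i) = (if even i then x else x ^ q)"
proof (induction i)
  case 0 then show ?case by simp
next
  case (Suc i)
  have "x ^ (q ^ Suc i) = (x ^ (q ^ i)) ^ q" by (metis power_Suc power_mult mult.commute)
  also have "\<dots> = (if even i then x ^ q else (x ^ q) ^ q)" using Suc by simp
  also have "(x ^ q) ^ q = x"
  proof -
    have "(x ^ q) ^ q = x ^ (q^2)" by (simp add: power_mult[symmetric] power2_eq_square)
    then show ?thesis using fq by simp
  qed
  finally show ?case by auto
qed

lemma carrier_finite: "finite (U_carrier h :: (nat \<Rightarrow> 'f::{field,finite}) set)"
proof -
  let ?f = "\<lambda>a::nat\<Rightarrow>'f. map a [0..<Suc (U_N h)]"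
  have "inj_on ?f (U_carrier h)"
  proof (rule inj_onI)
    fix a b assume a: "a \<in> U_carrier h" and b: "b \<in> U_carrier h" and e: "?f a = ?f b"
    show "a = b"
    proof
      fix i show "a i = b i"
      proof (cases "i \<le> U_N h")
        case True
        then have "i < length [0..<Suc (U_N h)]" by simp
        from nth_map[OF this, of a] nth_map[OF this, of b] e True show ?thesis
          by (metis less_Suc_eq_le nth_upt plus_nat.add_0)
      next
        case False then show ?thesis using a b by (simp add: U_carrier_def)
      qed
    qed
  qed
  moreover have "?f ` U_carrier h \<subseteq> {xs. set xs \<subseteq> UNIV \<and> length xs = Suc (U_N h)}" by auto
  moreover have "finite {xs::'f list. set xs \<subseteq> UNIV \<and> length xs = Suc (U_N h)}"
    by (rule finite_lists_length_eq) simp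
  ultimately show ?thesis by (meson finite_imageD finite_subset)
qed

lemma one_in: "U_one \<in> U_carrier h"
  by (simp add: U_one_def U_carrier_def)

lemma mult_closed:
  assumes "a \<in> U_carrier h" "b \<in> U_carrier h"
  shows "U_mult q h a b \<in> U_carrier h"
  using assms by (simp add: U_carrier_def U_mult_def)

lemma mult_at:
  "k \<le> U_N h \<Longrightarrow> U_mult q h a b k = (\<Sum>i=0..k. a i * (b (k - i)) ^ (q ^ i))"
  by (simp add: U_mult_def)

lemma left_inj:
  assumes a: "a \<in> U_carrier h" and b1: "b1 \<in> U_carrier h" and b2: "b2 \<in> U_carrier h"
    and e: "U_mult q h a b1 = U_mult q h a b2"
  shows "b1 = b2"
proof
  fix k show "b1 k = b2 k"
  proof (induction k rule: less_induct)
    case (less k)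
    show ?case
    proof (cases "k \<le> U_N h")
      case False then show ?thesis using b1 b2 by (simp add: U_carrier_def)
    next
      case True
      have split: "\<And>b. (\<Sum>i=0..k. a i * (b (k - i)) ^ (q ^ i)) = b k + (\<Sum>i\<in>{0..k}-{0}. a i * (b (k - i)) ^ (q ^ i))"
        using a by (simp add: sum.remove[of "{0..k}" 0] U_carrier_def)
      have "(\<Sum>i\<in>{0..k}-{0}. a i * (b1 (k - i)) ^ (q ^ i)) = (\<Sum>i\<in>{0..k}-{0}. a i * (b2 (k - i)) ^ (q ^ i))"
      proof (rule sum.cong)
        fix i assume "i \<in> {0..k}-{0}" then have "k - i < k" by auto
        then show "a i * (b1 (k - i)) ^ (q ^ i) = a i * (b2 (k - i)) ^ (q ^ i)" using less by simp
      qed simp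
      moreover have "b1 k + (\<Sum>i\<in>{0..k}-{0}. a i * (b1 (k - i)) ^ (q ^ i)) = b2 k + (\<Sum>i\<in>{0..k}-{0}. a i * (b2 (k - i)) ^ (q ^ i))"
        using split[of b1] split[of b2] mult_at[OF True, of q a b1] mult_at[OF True, of q a b2] e by metis
      ultimately show ?thesis by simp
    qed
  qed
qed

lemma right_inj:
  assumes x: "x \<in> U_carrier h" and b1: "b1 \<in> U_carrier h" and b2: "b2 \<in> U_carrier h"
    and e: "U_mult q h b1 x = U_mult q h b2 x"
  shows "b1 = b2"
proof
  fix k show "b1 k = b2 k"
  proof (induction k rule: less_induct)
    case (less k)
    show ?case
    proof (cases "k \<le> U_N h")
      case False then show ?thesis using b1 b2 by (simp add: U_carrier_def)
    next
      case True
      have split: "\<And>b. (\<Sum>i=0..k. b i * (x (k - i)) ^ (q ^ i)) = b k + (\<Sum>i\<in>{0..k}-{k}. b i * (x (k - i)) ^ (q ^ i))"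
        using x by (simp add: sum.remove[of "{0..k}" k] U_carrier_def)
      have "(\<Sum>i\<in>{0..k}-{k}. b1 i * (x (k - i)) ^ (q ^ i)) = (\<Sum>i\<in>{0..k}-{k}. b2 i * (x (k - i)) ^ (q ^ i))"
      proof (rule sum.cong)
        fix i assume "i \<in> {0..k}-{k}" then have "i < k" by auto
        then show "b1 i * (x (k - i)) ^ (q ^ i) = b2 i * (x (k - i)) ^ (q ^ i)" using less by simp
      qed simp
      moreover have "b1 k + (\<Sum>i\<in>{0..k}-{k}. b1 i * (x (k - i)) ^ (q ^ i)) = b2 k + (\<Sum>i\<in>{0..k}-{k}. b2 i * (x (k - i)) ^ (q ^ i))"
        using split[of b1] split[of b2] mult_at[OF True, of q b1 x] mult_at[OF True, of q b2 x] e by metis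
      ultimately show ?thesis by simp
    qed
  qed
qed

lemma left_surj:
  assumes a: "a \<in> U_carrier h" and c: "c \<in> U_carrier h"
  shows "\<exists>b\<in>U_carrier h. U_mult q h a b = (c :: nat \<Rightarrow> 'f::{field,finite})"
proof -
  have inj: "inj_on (U_mult q h a) (U_carrier h)"
    using left_inj[OF a] by (meson inj_onI)
  have sub: "U_mult q h a ` U_carrier h \<subseteq> U_carrier h" using mult_closed[OF a] by auto
  have "U_mult q h a ` U_carrier h = U_carrier h"
    by (rule card_subset_eq[OF carrier_finite sub]) (simp add: card_image[OF inj])
  then show ?thesis using c by (metis imageE)
qed

lemma right_surj:
  assumes a: "a \<in> U_carrier h" and c: "c \<in> U_carrier h"
  shows "\<exists>b\<in>U_carrier h. U_mult q h b a = (c :: nat \<Rightarrow> 'f::{field,finite})"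
proof -
  have inj: "inj_on (\<lambda>b. U_mult q h b a) (U_carrier h)"
    using right_inj[OF a] by (meson inj_onI)
  have sub: "(\<lambda>b. U_mult q h b a) ` U_carrier h \<subseteq> U_carrier h" using mult_closed[OF _ a] by auto
  have "(\<lambda>b. U_mult q h b a) ` U_carrier h = U_carrier h"
    by (rule card_subset_eq[OF carrier_finite sub]) (simp add: card_image[OF inj])
  then show ?thesis using c by (metis imageE)
qed

definition mono :: "nat \<Rightarrow> 'f::field \<Rightarrow> nat \<Rightarrow> 'f" where
  "mono d w = (\<lambda>i. if i = 0 then 1 else if i = d then w else 0)"

lemma mono_in: "1 \<le> d \<Longrightarrow> d \<le> U_N h \<Longrightarrow> mono d w \<in> U_carrier h"
  by (simp add: mono_def U_carrier_def)

lemma mult_mono_left: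
  assumes "1 \<le> d" "k \<le> U_N h"
  shows "U_mult q h (mono d w) g k = g k + (if d \<le> k then w * g (k - d) ^ (q ^ d) else 0)"
proof -
  have "U_mult q h (mono d w) g k = (\<Sum>i=0..k. (if i = 0 then g k else 0) + (if i = d then w * g (k - d) ^ (q ^ d) else 0))"
    unfolding mult_at[OF assms(2)] using assms(1) by (intro sum.cong) (auto simp: mono_def)
  also have "\<dots> = g k + (if d \<le> k then w * g (k - d) ^ (q ^ d) else 0)"
    by (simp add: sum.distrib)
  finally show ?thesis .
qed

lemma mult_mono_right:
  assumes "1 \<le> d" "k \<le> U_N h" "q > 0"
  shows "U_mult q h g (mono d w) k = g k + (if d \<le> k then g (k - d) * w ^ (q ^ (k - d)) else 0)"
proof -
  have "U_mult q h g (mono d w) k = (\<Sum>i=0..k. (if i = k then g k else 0) + (if d \<le> k \<and> i = k - d then g (k - d) * w ^ (q ^ (k - d)) else 0))"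
    unfolding mult_at[OF assms(2)] using assms(1,3) by (intro sum.cong) (auto simp: mono_def)
  also have "\<dots> = g k + (if d \<le> k then g (k - d) * w ^ (q ^ (k - d)) else 0)"
    by (simp add: sum.distrib)
  finally show ?thesis .
qed

lemma mult_top:
  assumes "k \<le> U_N h" "U_N h \<noteq> 0" "g \<in> U_carrier h" "q > 0"
  shows "U_mult q h g (U_top h c) k = g k + (if k = U_N h then c else 0)"
proof -
  have "U_mult q h g (U_top h c) k = (\<Sum>i=0..k. (if i = k then g k else 0) + (if i = 0 \<and> k = U_N h then c else 0))"
    unfolding mult_at[OF assms(1)] using assms by (intro sum.cong) (auto simp: U_top_def U_carrier_def)
  also have "\<dots> = g k + (if k = U_N h then c else 0)"
    by (simp add: sum.distrib)
  finally show ?thesis .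
qed


lemma twist_rel:
  fixes g :: "nat \<Rightarrow> 'f::field"
  assumes fq: "\<forall>y::'f. y ^ (q^2) = y" and q: "q > 0" and N2: "U_N h \<ge> 2"
    and g: "g \<in> U_carrier h" and r: "odd r" "r \<le> U_N h"
    and godd: "\<forall>i<r. odd i \<longrightarrow> g i = 0" and geven: "\<forall>i<r. even i \<longrightarrow> g i ^ q = g i"
  shows "U_mult q h (mono (U_N h - r) w) g =
         U_mult q h (U_mult q h g (U_top h (w * (g r)^q - g r * w^q))) (mono (U_N h - r) w)"
    (is "?L = ?R")
proof
  fix k
  define d where "d = U_N h - r"
  define c where "c = w * (g r)^q - g r * w^q"
  define G where "G = U_mult q h g (U_top h c)"
  have Neven: "even (U_N h)" by (simp add: U_N_def)
  have rN: "r < U_N h" using r Neven by (metis le_neq_implies_less)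
  have d1: "1 \<le> d" using rN by (simp add: d_def)
  have dodd: "odd d" using r Neven rN by (simp add: d_def)
  show "?L k = ?R k"
  proof (cases "k \<le> U_N h")
    case False then show ?thesis by (simp add: U_mult_def)
  next
    case True
    have L0: "U_mult q h (mono d w) g k = g k + (if d \<le> k then w * g (k - d) ^ (q ^ d) else 0)"
      by (rule mult_mono_left[OF d1 True])
    have L: "?L k = g k + (if d \<le> k then w * g (k - d) ^ (q ^ d) else 0)"
      using L0 by (simp add: d_def)
    have R0: "U_mult q h G (mono d w) k = G k + (if d \<le> k then G (k - d) * w ^ (q ^ (k - d)) else 0)"
      by (rule mult_mono_right[OF d1 True q])
    have R: "?R k = G k + (if d \<le> k then G (k - d) * w ^ (q ^ (k - d)) else 0)"
      using R0 by (simp add: d_def G_def c_def)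
    have Gk: "G k = g k + (if k = U_N h then c else 0)"
      using mult_top[OF True _ g q] N2 by (simp add: G_def)
    show ?thesis
    proof (cases "d \<le> k")
      case False
      then have "k \<noteq> U_N h" using d_def rN by auto
      then show ?thesis using L R Gk False by simp
    next
      case True
      define j where "j = k - d"
      have jle: "j \<le> r" using \<open>k \<le> U_N h\<close> by (simp add: j_def d_def)
      have Gj: "G j = g j"
        using mult_top[of j h g q c] \<open>k \<le> U_N h\<close> N2 g q d1 True by (simp add: G_def j_def)
      have fd: "g j ^ (q ^ d) = g j ^ q" using frob_pow[OF fq] dodd by simp
      have key: "w * g j ^ q = (if k = U_N h then c else 0) + g j * w ^ (q ^ j)"
      proof (cases "j = r")
        case True
        then have "k = U_N h" using j_def d_def \<open>d \<le> k\<close> rN by auto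
        moreover have "w ^ (q ^ j) = w ^ q" using frob_pow[OF fq] True r by simp
        ultimately show ?thesis using True by (simp add: c_def)
      next
        case False
        then have jr: "j < r" using jle by simp
        then have "k \<noteq> U_N h" using j_def d_def \<open>d \<le> k\<close> rN by auto
        moreover have "w * g j ^ q = g j * w ^ (q ^ j)"
        proof (cases "even j")
          case True
          then show ?thesis using geven jr frob_pow[OF fq, of w j] by (simp add: mult.commute)
        next
          case False
          then show ?thesis using godd jr q by simp
        qed
        ultimately show ?thesis by simp
      qed
      show ?thesis using L R Gk Gj fd key True by (simp add: j_def[symmetric] algebra_simps)
    qed
  qed
qed

lemma step_rel:
  fixes g g' :: "nat \<Rightarrow> 'f::field"
  assumes fq: "\<forall>y::'f. y ^ (q^2) = y" and q: "q > 0"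
    and g: "g \<in> U_carrier h" and r: "odd r" "r \<le> U_N h"
    and godd: "\<forall>i<r. odd i \<longrightarrow> g i = 0"
    and e: "even e" "e < r" "g e ^ q \<noteq> g e" and geven: "\<forall>i<e. even i \<longrightarrow> g i ^ q = g i"
    and w: "w = g r / (g e - g e ^ q)"
    and rel: "U_mult q h g' (mono (r - e) w) = U_mult q h (mono (r - e) w) g"
  shows "\<forall>i\<le>r. g' i = (if i = r then 0 else g i)"
proof -
  define d where "d = r - e"
  have d1: "1 \<le> d" using e by (simp add: d_def)
  have dodd: "odd d" using e r by (simp add: d_def)
  have "g' i = (if i = r then 0 else g i)" if "i \<le> r" for i
    using that
  proof (induction i rule: less_induct)
    case (less i)
    have iN: "i \<le> U_N h" using less.prems r by simp
    have eq: "g' i + (if d \<le> i then g' (i - d) * w ^ (q ^ (i - d)) else 0)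
            = g i + (if d \<le> i then w * g (i - d) ^ (q ^ d) else 0)"
      using mult_mono_right[OF d1 iN q, where g=g' and w=w] mult_mono_left[OF d1 iN, where g=g and w=w] rel
      by (simp add: d_def)
    show ?case
    proof (cases "d \<le> i")
      case False
      then have "i \<noteq> r" using d_def e by auto
      then show ?thesis using eq False by simp
    next
      case True
      define j where "j = i - d"
      have jlt: "j < i" using d1 True by (simp add: j_def)
      have jle: "j \<le> e" using less.prems by (simp add: j_def d_def)
      have IH: "g' j = g j" using less.IH[OF jlt] jlt less.prems e by auto
      have fd: "g j ^ (q ^ d) = g j ^ q" using frob_pow[OF fq] dodd by simp
      have eq2: "g' i = g i + w * g j ^ q - g j * w ^ (q ^ j)"
        using eq True IH fd by (simp add: j_def[symmetric] algebra_simps)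
      show ?thesis
      proof (cases "j = e")
        case True
        then have ir: "i = r" using j_def d_def \<open>d \<le> i\<close> e by auto
        have "w ^ (q ^ j) = w" using frob_pow[OF fq, of w j] True e by simp
        moreover have "g e - g e ^ q \<noteq> 0" using e by simp
        ultimately show ?thesis using eq2 True ir w by (simp add: field_simps)
      next
        case False
        then have je: "j < e" using jle by simp
        then have "i \<noteq> r" using j_def d_def \<open>d \<le> i\<close> e by auto
        moreover have "w * g j ^ q = g j * w ^ (q ^ j)"
        proof (cases "even j")
          case True
          then show ?thesis using geven je frob_pow[OF fq, of w j] by (simp add: mult.commute)
        next
          case False
          then show ?thesis using godd je e q by simp
        qed
        ultimately show ?thesis using eq2 by simp
      qed
    qed
  qed
  then show ?thesis by blast
qed


lemma reduce:
  fixes P :: "(nat \<Rightarrow> 'f::{field,finite}) \<Rightarrow> bool" and \<psi> :: "'f \<Rightarrow> complex"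
  assumes fq: "\<forall>y::'f. y ^ (q^2) = y" and q: "q > 0" and N2: "U_N h \<ge> 2"
    and PH: "\<And>g. g \<in> U_H h \<Longrightarrow> P g"
    and Pconj: "\<And>g g' x. g \<in> U_carrier h \<Longrightarrow> g' \<in> U_carrier h \<Longrightarrow> x \<in> U_carrier h \<Longrightarrow>
                 U_mult q h x g = U_mult q h g' x \<Longrightarrow> P g' \<Longrightarrow> P g"
    and Ptwist: "\<And>g x c. g \<in> U_carrier h \<Longrightarrow> x \<in> U_carrier h \<Longrightarrow>
                 U_mult q h x g = U_mult q h (U_mult q h g (U_top h c)) x \<Longrightarrow> \<psi> c \<noteq> 1 \<Longrightarrow> P g"
    and cond: "\<And>b. b \<noteq> 0 \<Longrightarrow> \<exists>w. \<psi> (w * b^q - b * w^q) \<noteq> 1"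
  shows "\<And>g. g \<in> U_carrier h \<Longrightarrow> P g"
proof -
  have main: "\<forall>g\<in>U_carrier h. (\<forall>i<r. odd i \<longrightarrow> g i = 0) \<longrightarrow> P g" if "r \<le> Suc (U_N h)" for r
    using that
  proof (induction r rule: inc_induct)
    case base
    show ?case
    proof (intro ballI impI)
      fix g :: "nat \<Rightarrow> 'f" assume g: "g \<in> U_carrier h" and z: "\<forall>i<Suc (U_N h). odd i \<longrightarrow> g i = 0"
      have "g \<in> U_H h"
        unfolding U_H_def using g z by (auto simp: U_carrier_def) (metis not_less_eq)
      then show "P g" by (rule PH)
    qed
  next
    case (step n)
    show ?case
    proof (intro ballI impI)
      fix g :: "nat \<Rightarrow> 'f" assume g: "g \<in> U_carrier h" and z: "\<forall>i<n. odd i \<longrightarrow> g i = 0"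
      show "P g"
      proof (cases "even n \<or> g n = 0")
        case True
        then have "\<forall>i<Suc n. odd i \<longrightarrow> g i = 0" using z less_Suc_eq by auto
        then show ?thesis using step.IH g by blast
      next
        case False
        then have nodd: "odd n" and gn: "g n \<noteq> 0" by auto
        have nN: "n \<le> U_N h" using step.hyps by simp
        show ?thesis
        proof (cases "\<forall>i<n. even i \<longrightarrow> g i ^ q = g i")
          case True
          obtain w where w: "\<psi> (w * (g n)^q - g n * w^q) \<noteq> 1" using cond[OF gn] by blast
          have Neven: "even (U_N h)" by (simp add: U_N_def)
          have "n < U_N h" using nN nodd Neven by (metis le_neq_implies_less)
          then have x: "mono (U_N h - n) w \<in> U_carrier h" by (intro mono_in) auto
          have rel: "U_mult q h (mono (U_N h - n) w) g =
              U_mult q h (U_mult q h g (U_top h (w * (g n)^q - g n * w^q))) (mono (U_N h - n) w)"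
            by (rule twist_rel[OF fq q N2 g nodd nN z True])
          show ?thesis by (rule Ptwist[OF g x rel w])
        next
          case False
          then have ex: "\<exists>i. i < n \<and> even i \<and> g i ^ q \<noteq> g i" by auto
          define e where "e = (LEAST i. i < n \<and> even i \<and> g i ^ q \<noteq> g i)"
          have e: "e < n \<and> even e \<and> g e ^ q \<noteq> g e"
            unfolding e_def using ex by (metis (mono_tags, lifting) LeastI)
          have emin: "\<forall>i<e. even i \<longrightarrow> g i ^ q = g i"
          proof (intro allI impI)
            fix i assume "i < e" "even i"
            then have "\<not> (i < n \<and> even i \<and> g i ^ q \<noteq> g i)"
              using not_less_Least[of i "\<lambda>i. i < n \<and> even i \<and> g i ^ q \<noteq> g i"] by (simp add: e_def)
            then show "g i ^ q = g i" using \<open>i < e\<close> \<open>even i\<close> e by auto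
          qed
          define w where "w = g n / (g e - g e ^ q)"
          have x: "mono (n - e) w \<in> U_carrier h" using e nN by (intro mono_in) auto
          obtain g' where g': "g' \<in> U_carrier h" and rel: "U_mult q h g' (mono (n - e) w) = U_mult q h (mono (n - e) w) g"
            using right_surj[OF x mult_closed[OF x g]] by blast
          have vals: "\<forall>i\<le>n. g' i = (if i = n then 0 else g i)"
            using step_rel[OF fq q g nodd nN z _ _ _ emin w_def rel] e by blast
          have "\<forall>i<Suc n. odd i \<longrightarrow> g' i = 0"
            using vals z by (metis less_Suc_eq_le order_le_less)
          then have "P g'" using step.IH g' by blast
          then show ?thesis using Pconj[OF g g' x rel[symmetric]] by blast
        qed
      qed
    qed
  qed
  fix g :: "nat \<Rightarrow> 'f" assume "g \<in> U_carrier h"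
  then show "P g" using main[of 0] by simp
qed



definition mtr :: "'a::comm_ring_1 mat \<Rightarrow> 'a" where
  "mtr A = (\<Sum>i<dim_row A. A $$ (i,i))"

lemma mult_entry:
  assumes "A \<in> carrier_mat n m" "B \<in> carrier_mat m p" "i < n" "j < p"
  shows "(A * B) $$ (i,j) = (\<Sum>k<m. A $$ (i,k) * B $$ (k,j))"
  using assms by (simp add: scalar_prod_def atLeast0LessThan)

lemma mtr_comm:
  fixes A B :: "'a::comm_ring_1 mat"
  assumes A: "A \<in> carrier_mat n m" and B: "B \<in> carrier_mat m n"
  shows "mtr (A * B) = mtr (B * A)"
proof -
  have dAB: "dim_row (A * B) = n" "dim_row (B * A) = m" using A B by auto
  have "mtr (A * B) = (\<Sum>i<n. \<Sum>k<m. A $$ (i,k) * B $$ (k,i))"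
    unfolding mtr_def dAB
  proof (intro sum.cong refl)
    fix i assume "i \<in> {..<n}" then show "(A * B) $$ (i,i) = (\<Sum>k<m. A $$ (i,k) * B $$ (k,i))"
      by (intro mult_entry[OF A B]) auto
  qed
  also have "\<dots> = (\<Sum>k<m. \<Sum>i<n. B $$ (k,i) * A $$ (i,k))"
    by (subst sum.swap) (simp add: mult.commute)
  also have "\<dots> = mtr (B * A)"
    unfolding mtr_def dAB
  proof (intro sum.cong refl)
    fix k assume "k \<in> {..<m}" then show "(\<Sum>i<n. B $$ (k,i) * A $$ (i,k)) = (B * A) $$ (k,k)"
      by (intro mult_entry[OF B A, symmetric]) auto
  qed
  finally show ?thesis .
qed

lemma mtr_sim:
  fixes A :: "complex mat"
  assumes A: "A \<in> carrier_mat n n" and Y: "Y \<in> carrier_mat n n" and S: "S \<in> carrier_mat n n"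
    and YS: "Y * S = 1\<^sub>m n"
  shows "mtr (Y * A * S) = mtr A"
proof -
  have SY: "S * Y = 1\<^sub>m n" by (rule mat_mult_left_right_inverse[OF Y S YS])
  have "mtr (Y * A * S) = mtr (Y * (A * S))" using A Y S by simp
  also have "\<dots> = mtr ((A * S) * Y)" using A Y S by (intro mtr_comm) auto
  also have "\<dots> = mtr (A * (S * Y))" using A Y S by simp
  also have "\<dots> = mtr A" using SY A by simp
  finally show ?thesis .
qed

lemma mtr_smult: "A \<in> carrier_mat n n \<Longrightarrow> mtr (c \<cdot>\<^sub>m A) = c * mtr A"
  unfolding mtr_def by (auto simp: sum_distrib_left intro!: sum.cong)

lemma mtr_one: "mtr (1\<^sub>m n :: complex mat) = of_nat n"
  unfolding mtr_def by simp

lemma mat_vec_zero: "M \<in> carrier_mat n m \<Longrightarrow> M *\<^sub>v 0\<^sub>v m = 0\<^sub>v n"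
  by (rule eq_vecI) auto

lemma schur_kernel:
  fixes \<rho> \<rho>' :: "'g \<Rightarrow> complex mat"
  assumes irr: "irreducible_rep G mul e n \<rho>"
    and M: "M \<in> carrier_mat n n"
    and r': "\<forall>g\<in>G. \<rho>' g \<in> carrier_mat n n"
    and inter: "\<forall>g\<in>G. M * \<rho> g = \<rho>' g * M"
    and v: "v \<in> carrier_vec n" "v \<noteq> 0\<^sub>v n" "M *\<^sub>v v = 0\<^sub>v n"
  shows "M = 0\<^sub>m n n"
proof -
  have rep: "\<forall>g\<in>G. \<rho> g \<in> carrier_mat n n" using irr by (simp add: irreducible_rep_def is_rep_def)
  define W where "W = {u \<in> carrier_vec n. M *\<^sub>v u = 0\<^sub>v n}"
  have inv: "invariant_subspace G n \<rho> W"
    unfolding invariant_subspace_def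
  proof (intro conjI ballI allI)
    show "W \<subseteq> carrier_vec n" by (auto simp: W_def)
    show "0\<^sub>v n \<in> W" using M by (simp add: W_def mat_vec_zero)
  next
    fix u w assume "u \<in> W" "w \<in> W"
    then show "u + w \<in> W" using M by (auto simp: W_def mult_add_distrib_mat_vec)
  next
    fix c :: complex and u assume "u \<in> W"
    then show "c \<cdot>\<^sub>v u \<in> W" using M by (auto simp: W_def mult_mat_vec)
  next
    fix g u assume g: "g \<in> G" and u: "u \<in> W"
    have ug: "u \<in> carrier_vec n" "M *\<^sub>v u = 0\<^sub>v n" using u by (auto simp: W_def)
    have rg: "\<rho> g \<in> carrier_mat n n" using rep g by simp
    have rg': "\<rho>' g \<in> carrier_mat n n" using r' g by simp
    have "M *\<^sub>v (\<rho> g *\<^sub>v u) = (M * \<rho> g) *\<^sub>v u" by (rule assoc_mult_mat_vec[OF M rg ug(1), symmetric])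
    also have "\<dots> = (\<rho>' g * M) *\<^sub>v u" using inter g by simp
    also have "\<dots> = \<rho>' g *\<^sub>v (M *\<^sub>v u)" by (rule assoc_mult_mat_vec[OF rg' M ug(1)])
    also have "\<dots> = 0\<^sub>v n" using ug mat_vec_zero[OF rg'] by simp
    finally show "\<rho> g *\<^sub>v u \<in> W" using rep g ug by (auto simp: W_def)
  qed
  have "W \<noteq> {0\<^sub>v n}" using v by (auto simp: W_def)
  then have Wall: "W = carrier_vec n" using irr inv by (auto simp: irreducible_rep_def)
  show ?thesis
  proof (rule eq_matI)
    fix i j assume i: "i < dim_row (0\<^sub>m n n :: complex mat)" and j: "j < dim_col (0\<^sub>m n n :: complex mat)"
    have "unit_vec n j \<in> W" using Wall by simp
    then have "M *\<^sub>v unit_vec n j = 0\<^sub>v n" by (simp add: W_def)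
    then have "(M *\<^sub>v unit_vec n j) $ i = 0" using i by simp
    then show "M $$ (i,j) = 0\<^sub>m n n $$ (i,j)" using M i j by simp
  qed (use M in auto)
qed

lemma schur_invertible:
  fixes \<rho> \<rho>' :: "'g \<Rightarrow> complex mat"
  assumes irr: "irreducible_rep G mul e n \<rho>"
    and M: "M \<in> carrier_mat n n"
    and r': "\<forall>g\<in>G. \<rho>' g \<in> carrier_mat n n"
    and inter: "\<forall>g\<in>G. M * \<rho> g = \<rho>' g * M"
    and nz: "M \<noteq> 0\<^sub>m n n"
  shows "invertible_mat M"
proof -
  have "det M \<noteq> 0"
  proof
    assume "det M = 0"
    then obtain v where "v \<in> carrier_vec n" "v \<noteq> 0\<^sub>v n" "M *\<^sub>v v = 0\<^sub>v n"
      using det_0_iff_vec_prod_zero[OF M] by blast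
    then show False using schur_kernel[OF irr M r' inter] nz by blast
  qed
  from det_non_zero_imp_unit[OF M this, of "()"]
  obtain B where B: "B \<in> carrier_mat n n" "B * M = 1\<^sub>m n" "M * B = 1\<^sub>m n"
    unfolding Units_def ring_mat_def by auto
  then show ?thesis using M unfolding invertible_mat_def inverts_mat_def square_mat.simps
    by (metis carrier_matD(1) carrier_matD(2))
qed

lemma schur_scalar:
  fixes \<rho> :: "'g \<Rightarrow> complex mat"
  assumes irr: "irreducible_rep G mul e n \<rho>"
    and Z: "Z \<in> carrier_mat n n"
    and com: "\<forall>g\<in>G. Z * \<rho> g = \<rho> g * Z"
  shows "\<exists>c. Z = c \<cdot>\<^sub>m 1\<^sub>m n"
proof -
  have n: "n > 0" using irr by (simp add: irreducible_rep_def)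
  have rep: "\<forall>g\<in>G. \<rho> g \<in> carrier_mat n n" using irr by (simp add: irreducible_rep_def is_rep_def)
  from degree_monic_char_poly[OF Z] n have "degree (char_poly Z) > 0" by auto
  then have "\<not> constant (poly (char_poly Z))" by (simp add: constant_degree)
  from fundamental_theorem_of_algebra[OF this] obtain c where "poly (char_poly Z) c = 0" by auto
  then have "eigenvalue Z c" using eigenvalue_root_char_poly[OF Z] by simp
  then obtain v where v: "v \<in> carrier_vec n" "v \<noteq> 0\<^sub>v n" "Z *\<^sub>v v = c \<cdot>\<^sub>v v"
    unfolding eigenvalue_def eigenvector_def using Z by auto
  define M where "M = Z - c \<cdot>\<^sub>m 1\<^sub>m n"
  have M: "M \<in> carrier_mat n n" unfolding M_def by (rule minus_carrier_mat) simp
  have inter: "\<forall>g\<in>G. M * \<rho> g = \<rho> g * M"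
  proof
    fix g assume g: "g \<in> G"
    have r: "\<rho> g \<in> carrier_mat n n" using rep g by simp
    have "M * \<rho> g = Z * \<rho> g - (c \<cdot>\<^sub>m 1\<^sub>m n) * \<rho> g"
      unfolding M_def using Z r by (simp add: minus_mult_distrib_mat)
    also have "\<dots> = \<rho> g * Z - \<rho> g * (c \<cdot>\<^sub>m 1\<^sub>m n)"
    proof -
      have "(c \<cdot>\<^sub>m 1\<^sub>m n) * \<rho> g = c \<cdot>\<^sub>m \<rho> g" using mult_smult_assoc_mat[OF one_carrier_mat r] r by simp
      moreover have "\<rho> g * (c \<cdot>\<^sub>m 1\<^sub>m n) = c \<cdot>\<^sub>m \<rho> g" using mult_smult_distrib[OF r one_carrier_mat] r by simp
      ultimately show ?thesis using com g by simp
    qed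
    also have "\<dots> = \<rho> g * M"
      unfolding M_def using Z r by (simp add: mult_minus_distrib_mat)
    finally show "M * \<rho> g = \<rho> g * M" .
  qed
  have "M *\<^sub>v v = Z *\<^sub>v v - (c \<cdot>\<^sub>m 1\<^sub>m n) *\<^sub>v v"
    unfolding M_def using Z v by (simp add: minus_mult_distrib_mat_vec)
  also have "\<dots> = 0\<^sub>v n"
  proof -
    have "\<And>i. i < n \<Longrightarrow> (\<Sum>ia = 0..<n. c * (if ia = i then 1 else 0) * v $ ia) = c * v $ i"
    proof -
      fix i assume i: "i < n"
      have "(\<Sum>ia = 0..<n. c * (if ia = i then 1 else 0) * v $ ia) = (\<Sum>ia = 0..<n. if ia = i then c * v $ i else 0)"
        by (rule sum.cong) auto
      also have "\<dots> = c * v $ i" using i by (simp add: sum.delta)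
      finally show "(\<Sum>ia = 0..<n. c * (if ia = i then 1 else 0) * v $ ia) = c * v $ i" .
    qed
    then show ?thesis using v by (intro eq_vecI) (auto simp: scalar_prod_def)
  qed
  finally have "M = 0\<^sub>m n n" using schur_kernel[OF irr M rep inter v(1,2)] by blast
  then have "Z = c \<cdot>\<^sub>m 1\<^sub>m n" unfolding M_def using Z
    by (intro eq_matI) (auto simp: mat_eq_iff)
  then show ?thesis by blast
qed


definition Ri :: "('g \<Rightarrow> complex mat) \<Rightarrow> nat \<Rightarrow> 'g \<Rightarrow> complex mat" where
  "Ri \<rho> n g = (SOME Y. Y \<in> carrier_mat n n \<and> \<rho> g * Y = 1\<^sub>m n \<and> Y * \<rho> g = 1\<^sub>m n)"

lemma Ri_prop:
  assumes rep: "is_rep G mul e n \<rho>" and g: "g \<in> G" and inv: "\<forall>g\<in>G. \<exists>g'\<in>G. mul g g' = e"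
  shows "Ri \<rho> n g \<in> carrier_mat n n \<and> \<rho> g * Ri \<rho> n g = 1\<^sub>m n \<and> Ri \<rho> n g * \<rho> g = 1\<^sub>m n"
proof -
  obtain g' where g': "g' \<in> G" "mul g g' = e" using inv g by blast
  have c: "\<rho> g \<in> carrier_mat n n" "\<rho> g' \<in> carrier_mat n n" using rep g g' by (auto simp: is_rep_def)
  have "\<rho> g * \<rho> g' = 1\<^sub>m n" using rep g g' by (metis is_rep_def)
  moreover have "\<rho> g' * \<rho> g = 1\<^sub>m n" by (rule mat_mult_left_right_inverse[OF c calculation])
  ultimately have "\<exists>Y. Y \<in> carrier_mat n n \<and> \<rho> g * Y = 1\<^sub>m n \<and> Y * \<rho> g = 1\<^sub>m n" using c by blast
  then show ?thesis unfolding Ri_def by (rule someI_ex)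
qed

definition Avg :: "'g set \<Rightarrow> nat \<Rightarrow> ('g \<Rightarrow> complex mat) \<Rightarrow> ('g \<Rightarrow> complex mat) \<Rightarrow> complex mat \<Rightarrow> complex mat" where
  "Avg G n \<rho>2 \<rho>1 X = mat n n (\<lambda>(i,j). \<Sum>g\<in>G. (\<rho>2 g * X * Ri \<rho>1 n g) $$ (i,j))"

lemma Avg_carrier: "Avg G n \<rho>2 \<rho>1 X \<in> carrier_mat n n"
  by (simp add: Avg_def)

lemma Avg_index: "i < n \<Longrightarrow> j < n \<Longrightarrow> Avg G n \<rho>2 \<rho>1 X $$ (i,j) = (\<Sum>g\<in>G. (\<rho>2 g * X * Ri \<rho>1 n g) $$ (i,j))"
  by (simp add: Avg_def)

lemma Avg_inter:
  assumes rep1: "is_rep G mul e n \<rho>1" and rep2: "is_rep G mul e n \<rho>2"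
    and inv: "\<forall>g\<in>G. \<exists>g'\<in>G. mul g g' = e"
    and bij: "\<forall>h\<in>G. bij_betw (mul h) G G"
    and X: "X \<in> carrier_mat n n" and h: "h \<in> G"
  shows "Avg G n \<rho>2 \<rho>1 X * \<rho>1 h = \<rho>2 h * Avg G n \<rho>2 \<rho>1 X"
proof -
  define M where "M g = \<rho>2 g * X * Ri \<rho>1 n g" for g
  have c1: "\<And>g. g \<in> G \<Longrightarrow> \<rho>1 g \<in> carrier_mat n n" using rep1 by (simp add: is_rep_def)
  have c2: "\<And>g. g \<in> G \<Longrightarrow> \<rho>2 g \<in> carrier_mat n n" using rep2 by (simp add: is_rep_def)
  have hom1: "\<And>g g'. g \<in> G \<Longrightarrow> g' \<in> G \<Longrightarrow> \<rho>1 (mul g g') = \<rho>1 g * \<rho>1 g'" using rep1 by (simp add: is_rep_def)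
  have hom2: "\<And>g g'. g \<in> G \<Longrightarrow> g' \<in> G \<Longrightarrow> \<rho>2 (mul g g') = \<rho>2 g * \<rho>2 g'" using rep2 by (simp add: is_rep_def)
  have cl: "\<And>g. g \<in> G \<Longrightarrow> mul h g \<in> G" using bij h by (meson bij_betwE)
  have RiP: "\<And>g. g \<in> G \<Longrightarrow> Ri \<rho>1 n g \<in> carrier_mat n n \<and> \<rho>1 g * Ri \<rho>1 n g = 1\<^sub>m n \<and> Ri \<rho>1 n g * \<rho>1 g = 1\<^sub>m n"
    using Ri_prop[OF rep1 _ inv] by blast
  have Mc: "M g \<in> carrier_mat n n" if "g \<in> G" for g
    unfolding M_def using mult_carrier_mat[OF mult_carrier_mat[OF c2[OF that] X]] RiP[OF that] by blast
  have key: "\<rho>2 h * M g = M (mul h g) * \<rho>1 h" if g: "g \<in> G" for g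
  proof -
    have hg: "mul h g \<in> G" using cl g .
    obtain Rg where Rg: "Rg = Ri \<rho>1 n g" by blast
    obtain Rhg where Rhg: "Rhg = Ri \<rho>1 n (mul h g)" by blast
    have Rgc: "Rg \<in> carrier_mat n n" "\<rho>1 g * Rg = 1\<^sub>m n" using RiP[OF g] Rg by auto
    have Rhgc: "Rhg \<in> carrier_mat n n" "Rhg * \<rho>1 (mul h g) = 1\<^sub>m n" using RiP[OF hg] Rhg by auto
    have A: "Rhg * \<rho>1 h = Rg"
    proof -
      have ch: "\<rho>1 h \<in> carrier_mat n n" and cg: "\<rho>1 g \<in> carrier_mat n n" using c1[OF h] c1[OF g] by auto
      have "Rg = (Rhg * \<rho>1 (mul h g)) * Rg" using Rhgc Rgc by simp
      also have "\<dots> = (Rhg * (\<rho>1 h * \<rho>1 g)) * Rg" using hom1[OF h g] by simp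
      also have "\<dots> = Rhg * ((\<rho>1 h * \<rho>1 g) * Rg)"
        by (rule assoc_mult_mat[OF Rhgc(1) mult_carrier_mat[OF ch cg] Rgc(1)])
      also have "(\<rho>1 h * \<rho>1 g) * Rg = \<rho>1 h * (\<rho>1 g * Rg)"
        by (rule assoc_mult_mat[OF ch cg Rgc(1)])
      also have "Rhg * (\<rho>1 h * (\<rho>1 g * Rg)) = Rhg * \<rho>1 h" using Rgc ch by simp
      finally have "Rg = Rhg * \<rho>1 h" .
      then show ?thesis by simp
    qed
    have "M (mul h g) * \<rho>1 h = \<rho>2 (mul h g) * X * (Rhg * \<rho>1 h)"
      unfolding M_def Rhg[symmetric]
      by (rule assoc_mult_mat[OF mult_carrier_mat[OF c2[OF hg] X] Rhgc(1) c1[OF h]])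
    also have "\<dots> = \<rho>2 h * \<rho>2 g * X * Rg" using A hom2[OF h g] by simp
    also have "\<rho>2 h * \<rho>2 g * X = \<rho>2 h * (\<rho>2 g * X)"
      by (rule assoc_mult_mat[OF c2[OF h] c2[OF g] X])
    also have "\<rho>2 h * (\<rho>2 g * X) * Rg = \<rho>2 h * (\<rho>2 g * X * Rg)"
      by (rule assoc_mult_mat[OF c2[OF h] mult_carrier_mat[OF c2[OF g] X] Rgc(1)])
    also have "\<dots> = \<rho>2 h * M g" unfolding M_def Rg by simp
    finally show ?thesis by simp
  qed
  show ?thesis
  proof (rule eq_matI)
    fix i j assume i: "i < dim_row (\<rho>2 h * Avg G n \<rho>2 \<rho>1 X)" and j: "j < dim_col (\<rho>2 h * Avg G n \<rho>2 \<rho>1 X)"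
    have i': "i < n" and j': "j < n" using i j c2[OF h] by (auto simp: Avg_def)
    have "(\<rho>2 h * Avg G n \<rho>2 \<rho>1 X) $$ (i,j) = (\<Sum>l<n. \<rho>2 h $$ (i,l) * Avg G n \<rho>2 \<rho>1 X $$ (l,j))"
      by (rule mult_entry[OF c2[OF h] Avg_carrier i' j'])
    also have "\<dots> = (\<Sum>l<n. \<rho>2 h $$ (i,l) * (\<Sum>g\<in>G. M g $$ (l,j)))"
      by (intro sum.cong refl) (simp add: Avg_index j' M_def)
    also have "\<dots> = (\<Sum>g\<in>G. \<Sum>l<n. \<rho>2 h $$ (i,l) * M g $$ (l,j))"
      by (simp add: sum_distrib_left sum.swap[of _ G])
    also have "\<dots> = (\<Sum>g\<in>G. (\<rho>2 h * M g) $$ (i,j))"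
      using mult_entry[OF c2[OF h] Mc i' j'] by simp
    also have "\<dots> = (\<Sum>g\<in>G. (M (mul h g) * \<rho>1 h) $$ (i,j))"
      using key by simp
    also have "\<dots> = (\<Sum>g\<in>G. \<Sum>l<n. M (mul h g) $$ (i,l) * \<rho>1 h $$ (l,j))"
      using mult_entry[OF Mc[OF cl] c1[OF h] i' j'] by simp
    also have "\<dots> = (\<Sum>l<n. (\<Sum>g\<in>G. M (mul h g) $$ (i,l)) * \<rho>1 h $$ (l,j))"
      by (simp add: sum_distrib_right sum.swap[of _ G])
    also have "\<dots> = (\<Sum>l<n. (\<Sum>g\<in>G. M g $$ (i,l)) * \<rho>1 h $$ (l,j))"
      using sum.reindex_bij_betw[OF bspec[OF bij h], of "\<lambda>g. M g $$ (_,_)"] by simp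
    also have "\<dots> = (\<Sum>l<n. Avg G n \<rho>2 \<rho>1 X $$ (i,l) * \<rho>1 h $$ (l,j))"
      by (intro sum.cong refl) (simp add: Avg_index i' M_def)
    also have "\<dots> = (Avg G n \<rho>2 \<rho>1 X * \<rho>1 h) $$ (i,j)"
      by (rule mult_entry[OF Avg_carrier c1[OF h] i' j', symmetric])
    finally show "(Avg G n \<rho>2 \<rho>1 X * \<rho>1 h) $$ (i,j) = (\<rho>2 h * Avg G n \<rho>2 \<rho>1 X) $$ (i,j)" by simp
  qed (use c1[OF h] c2[OF h] in \<open>auto simp: Avg_def\<close>)
qed


definition Eu :: "nat \<Rightarrow> nat \<Rightarrow> nat \<Rightarrow> complex mat" where
  "Eu n i j = mat n n (\<lambda>(a,b). if a = i \<and> b = j then 1 else 0)"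

lemma Eu_carrier: "Eu n i j \<in> carrier_mat n n" by (simp add: Eu_def)

lemma Eu_entry:
  assumes A: "A \<in> carrier_mat n n" and Y: "Y \<in> carrier_mat n n" and i: "i < n" and j: "j < n"
  shows "(A * Eu n i j * Y) $$ (i,j) = A $$ (i,i) * Y $$ (j,j)"
proof -
  have AE: "(A * Eu n i j) $$ (a,b) = (if b = j then A $$ (a,i) else 0)" if "a < n" "b < n" for a b
  proof -
    have "(A * Eu n i j) $$ (a,b) = (\<Sum>k<n. A $$ (a,k) * Eu n i j $$ (k,b))"
      by (rule mult_entry[OF A Eu_carrier that])
    also have "\<dots> = (\<Sum>k<n. if k = i then (if b = j then A $$ (a,i) else 0) else 0)"
      by (intro sum.cong refl) (use that in \<open>auto simp: Eu_def\<close>)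
    also have "\<dots> = (if b = j then A $$ (a,i) else 0)" using i by (simp add: sum.delta)
    finally show ?thesis .
  qed
  have "(A * Eu n i j * Y) $$ (i,j) = (\<Sum>k<n. (A * Eu n i j) $$ (i,k) * Y $$ (k,j))"
    by (rule mult_entry[OF mult_carrier_mat[OF A Eu_carrier] Y i j])
  also have "\<dots> = (\<Sum>k<n. if k = j then A $$ (i,i) * Y $$ (j,j) else 0)"
    by (intro sum.cong refl) (auto simp: AE i)
  also have "\<dots> = A $$ (i,i) * Y $$ (j,j)" using j by (simp add: sum.delta)
  finally show ?thesis .
qed

lemma mtr_Eu: "i < n \<Longrightarrow> j < n \<Longrightarrow> mtr (Eu n i j) = (if i = j then 1 else 0)"
proof -
  assume i: "i < n" and j: "j < n"
  have "mtr (Eu n i j) = (\<Sum>a<n. if a = i then (if i = j then 1 else 0) else 0)"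
    unfolding mtr_def by (intro sum.cong) (auto simp: Eu_def)
  also have "\<dots> = (if i = j then 1 else 0)" using i by (simp add: sum.delta)
  finally show ?thesis .
qed

lemma Avg_trace:
  assumes rep1: "is_rep G mul e n \<rho>1" and rep2: "is_rep G mul e n \<rho>2"
    and inv: "\<forall>g\<in>G. \<exists>g'\<in>G. mul g g' = e"
  shows "(\<Sum>i<n. \<Sum>j<n. Avg G n \<rho>2 \<rho>1 (Eu n i j) $$ (i,j)) = (\<Sum>g\<in>G. mtr (\<rho>2 g) * mtr (Ri \<rho>1 n g))"
proof -
  have c2: "\<And>g. g \<in> G \<Longrightarrow> \<rho>2 g \<in> carrier_mat n n" using rep2 by (simp add: is_rep_def)
  have RiC: "\<And>g. g \<in> G \<Longrightarrow> Ri \<rho>1 n g \<in> carrier_mat n n"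
    using Ri_prop[OF rep1 _ inv] by blast
  have "(\<Sum>i<n. \<Sum>j<n. Avg G n \<rho>2 \<rho>1 (Eu n i j) $$ (i,j))
      = (\<Sum>i<n. \<Sum>j<n. \<Sum>g\<in>G. \<rho>2 g $$ (i,i) * Ri \<rho>1 n g $$ (j,j))"
    by (intro sum.cong refl) (auto simp: Avg_index Eu_entry c2 RiC)
  also have "\<dots> = (\<Sum>i<n. \<Sum>g\<in>G. \<Sum>j<n. \<rho>2 g $$ (i,i) * Ri \<rho>1 n g $$ (j,j))"
    by (intro sum.cong refl) (rule sum.swap)
  also have "\<dots> = (\<Sum>g\<in>G. \<Sum>i<n. \<Sum>j<n. \<rho>2 g $$ (i,i) * Ri \<rho>1 n g $$ (j,j))"
    by (rule sum.swap)
  also have "\<dots> = (\<Sum>g\<in>G. (\<Sum>i<n. \<rho>2 g $$ (i,i)) * (\<Sum>j<n. Ri \<rho>1 n g $$ (j,j)))"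
    by (intro sum.cong refl) (rule sum_product[symmetric])
  also have "\<dots> = (\<Sum>g\<in>G. mtr (\<rho>2 g) * mtr (Ri \<rho>1 n g))"
  proof (intro sum.cong refl)
    fix g assume g: "g \<in> G"
    have "dim_row (\<rho>2 g) = n" "dim_row (Ri \<rho>1 n g) = n"
      using carrier_matD(1)[OF c2[OF g]] carrier_matD(1)[OF RiC[OF g]] by auto
    then show "(\<Sum>i<n. \<rho>2 g $$ (i,i)) * (\<Sum>j<n. Ri \<rho>1 n g $$ (j,j)) = mtr (\<rho>2 g) * mtr (Ri \<rho>1 n g)"
      by (simp add: mtr_def)
  qed
  finally show ?thesis .
qed

lemma Avg_self:
  assumes irr: "irreducible_rep G mul e n \<rho>"
    and inv: "\<forall>g\<in>G. \<exists>g'\<in>G. mul g g' = e"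
    and bij: "\<forall>h\<in>G. bij_betw (mul h) G G"
    and i: "i < n" and j: "j < n"
  shows "Avg G n \<rho> \<rho> (Eu n i j) $$ (i,j) = (if i = j then of_nat (card G) / of_nat n else 0)"
proof -
  have rep: "is_rep G mul e n \<rho>" and n: "n > 0" using irr by (auto simp: irreducible_rep_def)
  have c: "\<And>g. g \<in> G \<Longrightarrow> \<rho> g \<in> carrier_mat n n" using rep by (simp add: is_rep_def)
  have RiP: "\<And>g. g \<in> G \<Longrightarrow> Ri \<rho> n g \<in> carrier_mat n n \<and> \<rho> g * Ri \<rho> n g = 1\<^sub>m n"
    using Ri_prop[OF rep _ inv] by blast
  define Z where "Z = Avg G n \<rho> \<rho> (Eu n i j)"
  have Zc: "Z \<in> carrier_mat n n" by (simp add: Z_def Avg_carrier)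
  have com: "\<forall>g\<in>G. Z * \<rho> g = \<rho> g * Z"
    using Avg_inter[OF rep rep inv bij Eu_carrier] by (simp add: Z_def)
  obtain c where Zs: "Z = c \<cdot>\<^sub>m 1\<^sub>m n" using schur_scalar[OF irr Zc com] by blast
  have dZ: "dim_row Z = n" using Zc by simp
  have "mtr Z = (\<Sum>a<n. \<Sum>g\<in>G. (\<rho> g * Eu n i j * Ri \<rho> n g) $$ (a,a))"
    unfolding mtr_def dZ unfolding Z_def by (intro sum.cong refl) (simp add: Avg_index)
  also have "\<dots> = (\<Sum>g\<in>G. \<Sum>a<n. (\<rho> g * Eu n i j * Ri \<rho> n g) $$ (a,a))"
    by (rule sum.swap)
  also have "\<dots> = (\<Sum>g\<in>G. mtr (\<rho> g * Eu n i j * Ri \<rho> n g))"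
  proof (intro sum.cong refl)
    fix g assume "g \<in> G"
    then have "dim_row (\<rho> g * Eu n i j * Ri \<rho> n g) = n" using carrier_matD(1)[OF c] by simp
    then show "(\<Sum>a<n. (\<rho> g * Eu n i j * Ri \<rho> n g) $$ (a,a)) = mtr (\<rho> g * Eu n i j * Ri \<rho> n g)"
      unfolding mtr_def by simp
  qed
  also have "\<dots> = (\<Sum>g\<in>G. mtr (Eu n i j))"
    by (intro sum.cong refl mtr_sim) (use c RiP in \<open>auto simp: Eu_carrier\<close>)
  also have "\<dots> = of_nat (card G) * (if i = j then 1 else 0)" using mtr_Eu[OF i j] by simp
  finally have mz: "mtr Z = of_nat (card G) * (if i = j then 1 else 0)" .
  have "mtr Z = c * of_nat n"
    unfolding Zs mtr_smult[OF one_carrier_mat, of c n] mtr_one[of n] by simp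
  with mz have "c * of_nat n = of_nat (card G) * (if i = j then 1 else 0)" by simp
  then have cv: "c = of_nat (card G) * (if i = j then 1 else 0) / of_nat n" using n
    by (simp add: field_simps)
  show ?thesis using cv i j unfolding Z_def[symmetric] Zs by auto
qed


lemma left_bij:
  assumes a: "a \<in> U_carrier h"
  shows "bij_betw (U_mult q h a) (U_carrier h) (U_carrier h :: (nat \<Rightarrow> 'f::{field,finite}) set)"
proof -
  have inj: "inj_on (U_mult q h a) (U_carrier h)"
    using left_inj[OF a] by (meson inj_onI)
  have sub: "U_mult q h a ` U_carrier h \<subseteq> U_carrier h" using mult_closed[OF a] by auto
  have "U_mult q h a ` U_carrier h = U_carrier h"
    by (rule card_subset_eq[OF carrier_finite sub]) (simp add: card_image[OF inj])
  then show ?thesis using inj by (simp add: bij_betw_def)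
qed

lemma top_in: "U_N h \<noteq> 0 \<Longrightarrow> U_top h c \<in> U_carrier h"
  by (simp add: U_top_def U_carrier_def)

lemma conj_trace:
  assumes rep: "is_rep G mul e n \<rho>" and inv: "\<forall>g\<in>G. \<exists>g'\<in>G. mul g g' = e"
    and x: "x \<in> G" and g: "g \<in> G" and g': "g' \<in> G" and rel: "mul x g = mul g' x"
  shows "mtr (\<rho> g) = mtr (\<rho> g')"
proof -
  have c: "\<And>y. y \<in> G \<Longrightarrow> \<rho> y \<in> carrier_mat n n" using rep by (simp add: is_rep_def)
  have hom: "\<And>a b. a \<in> G \<Longrightarrow> b \<in> G \<Longrightarrow> \<rho> (mul a b) = \<rho> a * \<rho> b" using rep by (simp add: is_rep_def)
  obtain R where R: "R \<in> carrier_mat n n" "\<rho> x * R = 1\<^sub>m n" "R * \<rho> x = 1\<^sub>m n"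
    using Ri_prop[OF rep x inv] by blast
  have e1: "\<rho> x * \<rho> g = \<rho> g' * \<rho> x" using hom[OF x g] hom[OF g' x] rel by simp
  have "\<rho> g = (R * \<rho> x) * \<rho> g" using R c[OF g] by simp
  also have "\<dots> = R * (\<rho> x * \<rho> g)" by (rule assoc_mult_mat[OF R(1) c[OF x] c[OF g]])
  also have "\<dots> = R * (\<rho> g' * \<rho> x)" using e1 by simp
  also have "\<dots> = R * \<rho> g' * \<rho> x" by (rule assoc_mult_mat[OF R(1) c[OF g'] c[OF x], symmetric])
  finally have "mtr (\<rho> g) = mtr (R * \<rho> g' * \<rho> x)" by simp
  also have "\<dots> = mtr (\<rho> g')" by (rule mtr_sim[OF c[OF g'] R(1) c[OF x] R(3)])
  finally show ?thesis .
qed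

lemma twist_trace:
  assumes rep: "is_rep G mul e n \<rho>" and inv: "\<forall>g\<in>G. \<exists>g'\<in>G. mul g g' = e"
    and x: "x \<in> G" and g: "g \<in> G" and t: "t \<in> G" and tv: "\<rho> t = z \<cdot>\<^sub>m 1\<^sub>m n"
    and gt: "mul g t \<in> G"
    and rel: "mul x g = mul (mul g t) x" and z: "z \<noteq> 1"
  shows "mtr (\<rho> g) = 0"
proof -
  have c: "\<And>y. y \<in> G \<Longrightarrow> \<rho> y \<in> carrier_mat n n" using rep by (simp add: is_rep_def)
  have hom: "\<And>a b. a \<in> G \<Longrightarrow> b \<in> G \<Longrightarrow> \<rho> (mul a b) = \<rho> a * \<rho> b" using rep by (simp add: is_rep_def)
  obtain R where R: "R \<in> carrier_mat n n" "\<rho> x * R = 1\<^sub>m n" "R * \<rho> x = 1\<^sub>m n"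
    using Ri_prop[OF rep x inv] by blast
  have gtv: "\<rho> (mul g t) = z \<cdot>\<^sub>m \<rho> g"
    using hom[OF g t] tv mult_smult_distrib[OF c[OF g] one_carrier_mat] c[OF g] by simp
  have e1: "\<rho> x * \<rho> g = (z \<cdot>\<^sub>m \<rho> g) * \<rho> x" using hom[OF x g] hom[OF gt x] rel gtv by simp
  have "\<rho> g = (R * \<rho> x) * \<rho> g" using R c[OF g] by simp
  also have "\<dots> = R * (\<rho> x * \<rho> g)" by (rule assoc_mult_mat[OF R(1) c[OF x] c[OF g]])
  also have "\<dots> = R * ((z \<cdot>\<^sub>m \<rho> g) * \<rho> x)" using e1 by simp
  also have "\<dots> = z \<cdot>\<^sub>m (R * (\<rho> g * \<rho> x))"
    using mult_smult_assoc_mat[OF c[OF g] c[OF x]] mult_smult_distrib[OF R(1) mult_carrier_mat[OF c[OF g] c[OF x]]] by simp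
  also have "R * (\<rho> g * \<rho> x) = R * \<rho> g * \<rho> x" by (rule assoc_mult_mat[OF R(1) c[OF g] c[OF x], symmetric])
  finally have "mtr (\<rho> g) = mtr (z \<cdot>\<^sub>m (R * \<rho> g * \<rho> x))" by simp
  also have "\<dots> = z * mtr (R * \<rho> g * \<rho> x)"
    by (rule mtr_smult[OF mult_carrier_mat[OF mult_carrier_mat[OF R(1) c[OF g]] c[OF x]]])
  also have "mtr (R * \<rho> g * \<rho> x) = mtr (\<rho> g)" by (rule mtr_sim[OF c[OF g] R(1) c[OF x] R(3)])
  finally have "(1 - z) * mtr (\<rho> g) = 0" by (simp add: algebra_simps)
  then show ?thesis using z by simp
qed

lemma conductor_ok:
  fixes \<psi> :: "'f::field \<Rightarrow> complex"
  assumes fq: "\<forall>y::'f. y ^ (q^2) = y" and ch: "additive_char \<psi>" and ex: "\<exists>x. \<psi> (x ^ q) \<noteq> \<psi> x"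
    and b: "b \<noteq> 0"
  shows "\<exists>w. \<psi> (w * b^q - b * w^q) \<noteq> 1"
proof -
  obtain x where x: "\<psi> (x ^ q) \<noteq> \<psi> x" using ex by blast
  define w where "w = (x / b) ^ q"
  have "w * b^q = x ^ q" unfolding w_def by (simp add: power_mult_distrib[symmetric] b)
  moreover have "w ^ q = x / b"
  proof -
    have "w ^ q = (x/b) ^ (q^2)" unfolding w_def by (simp add: power_mult[symmetric] power2_eq_square)
    then show ?thesis using fq by simp
  qed
  ultimately have c: "w * b^q - b * w^q = x ^ q - x" using b by simp
  have "\<psi> (x ^ q - x) * \<psi> x = \<psi> (x ^ q)" using ch unfolding additive_char_def by (metis diff_add_cancel)
  then have "\<psi> (x ^ q - x) \<noteq> 1" using x by auto
  then show ?thesis using c by metis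
qed

theorem corollary3p3:
  fixes p q k h n n' :: nat
    and \<psi> :: "'f::{field,finite} \<Rightarrow> complex"
    and \<rho> \<rho>' :: "(nat \<Rightarrow> 'f) \<Rightarrow> complex mat"
  assumes "prime p" and "k \<ge> 1" and "q = p ^ k" and "h \<ge> 2"
    and "card (UNIV :: 'f set) = q ^ 2"
    and "additive_char \<psi>" and "\<exists>x. \<psi> (x ^ q) \<noteq> \<psi> x"
    and "irreducible_rep (U_carrier h) (U_mult q h) U_one n \<rho>"
    and "\<forall>x. \<rho> (U_top h x) = \<psi> x \<cdot>\<^sub>m 1\<^sub>m n"
    and "irreducible_rep (U_carrier h) (U_mult q h) U_one n' \<rho>'"
    and "\<forall>x. \<rho>' (U_top h x) = \<psi> x \<cdot>\<^sub>m 1\<^sub>m n'"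
    and "rep_iso_on (U_H h) n \<rho> n' \<rho>'"
  shows "rep_iso_on (U_carrier h) n \<rho> n' \<rho>'"
  proof -
  let ?C = "U_carrier h :: (nat \<Rightarrow> 'f) set"
  let ?mul = "U_mult q h :: (nat \<Rightarrow> 'f) \<Rightarrow> _"
  have q0: "q > 0" using assms(1,3) by (simp add: prime_gt_0_nat)
  have fq: "\<forall>y::'f. y ^ (q^2) = y" using pow_card assms(5) by metis
  have N2: "U_N h \<ge> 2" using assms(4) by (simp add: U_N_def)
  have irr: "irreducible_rep ?C ?mul U_one n \<rho>" using assms(8) .
  have irr': "irreducible_rep ?C ?mul U_one n' \<rho>'" using assms(10) .
  from assms(12) have nn: "n = n'" and "\<exists>P \<in> carrier_mat n n. invertible_mat P \<and> (\<forall>g\<in>U_H h. P * \<rho> g = \<rho>' g * P)"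
    by (auto simp: rep_iso_on_def)
  then obtain P where P: "P \<in> carrier_mat n n" "invertible_mat P" "\<forall>g\<in>U_H h. P * \<rho> g = \<rho>' g * P" by blast
  have rep: "is_rep ?C ?mul U_one n \<rho>" using irr by (simp add: irreducible_rep_def)
  have rep': "is_rep ?C ?mul U_one n \<rho>'" using irr' nn by (simp add: irreducible_rep_def)
  have c: "\<And>g. g \<in> ?C \<Longrightarrow> \<rho> g \<in> carrier_mat n n" using rep by (simp add: is_rep_def)
  have c': "\<And>g. g \<in> ?C \<Longrightarrow> \<rho>' g \<in> carrier_mat n n" using rep' by (simp add: is_rep_def)
  have inv: "\<forall>g\<in>?C. \<exists>g'\<in>?C. ?mul g g' = U_one" using left_surj one_in by blast
  have bij: "\<forall>a\<in>?C. bij_betw (?mul a) ?C ?C" using left_bij by blast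
  have topC: "\<And>c. U_top h c \<in> ?C" using top_in[of h] N2 by simp
  obtain Q where Q0: "P * Q = 1\<^sub>m n" "Q * P = 1\<^sub>m (dim_row Q)"
    using P(1,2) unfolding invertible_mat_def inverts_mat_def by auto
  have dQ: "dim_row Q = n"
  proof -
    have "dim_col (Q * P) = n" using P(1) by simp
    then show ?thesis using Q0(2) by (metis index_one_mat(3))
  qed
  have Q: "P * Q = 1\<^sub>m n" "Q * P = 1\<^sub>m n" using Q0 dQ by auto
  have Qc: "Q \<in> carrier_mat n n"
  proof -
    have "dim_col Q = n" using Q(1) by (metis index_mult_mat(3) index_one_mat(3))
    then show ?thesis using dQ by auto
  qed
  have HC: "U_H h \<subseteq> ?C" by (auto simp: U_H_def)
  have treq: "\<And>g. g \<in> ?C \<Longrightarrow> mtr (\<rho> g) = mtr (\<rho>' g)"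
  proof (rule reduce[OF fq q0 N2, where \<psi> = \<psi>])
    fix g :: "nat \<Rightarrow> 'f" assume gH: "g \<in> U_H h"
    then have g: "g \<in> ?C" using HC by auto
    have "\<rho>' g = \<rho>' g * (P * Q)" using Q c'[OF g] by simp
    also have "\<dots> = (\<rho>' g * P) * Q" by (rule assoc_mult_mat[OF c'[OF g] P(1) Qc, symmetric])
    also have "\<dots> = P * \<rho> g * Q" using P(3) gH by simp
    finally have "mtr (\<rho>' g) = mtr (P * \<rho> g * Q)" by simp
    also have "\<dots> = mtr (\<rho> g)" by (rule mtr_sim[OF c[OF g] P(1) Qc Q(1)])
    finally show "mtr (\<rho> g) = mtr (\<rho>' g)" by simp
  next
    fix g g' x :: "nat \<Rightarrow> 'f"
    assume g: "g \<in> ?C" and g': "g' \<in> ?C" and x: "x \<in> ?C" and rel: "?mul x g = ?mul g' x"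
      and IH: "mtr (\<rho> g') = mtr (\<rho>' g')"
    show "mtr (\<rho> g) = mtr (\<rho>' g)"
      using conj_trace[OF rep inv x g g' rel] conj_trace[OF rep' inv x g g' rel] IH by simp
  next
    fix g x :: "nat \<Rightarrow> 'f" and cc :: 'f
    assume g: "g \<in> ?C" and x: "x \<in> ?C" and rel: "?mul x g = ?mul (?mul g (U_top h cc)) x"
      and z: "\<psi> cc \<noteq> 1"
    have gt: "?mul g (U_top h cc) \<in> ?C" using mult_closed[OF g topC] .
    have "mtr (\<rho> g) = 0"
      by (rule twist_trace[OF rep inv x g topC _ gt rel z]) (use assms(9) in simp)
    moreover have "mtr (\<rho>' g) = 0"
      by (rule twist_trace[OF rep' inv x g topC _ gt rel z]) (use assms(11) nn in simp)
    ultimately show "mtr (\<rho> g) = mtr (\<rho>' g)" by simp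
  next
    fix b :: 'f assume "b \<noteq> 0"
    then show "\<exists>w. \<psi> (w * b^q - b * w^q) \<noteq> 1" by (rule conductor_ok[OF fq assms(6,7)])
  qed
  have n0: "n > 0" using irr by (simp add: irreducible_rep_def)
  have cardC: "card ?C > 0" using carrier_finite one_in by (metis card_gt_0_iff empty_iff)
  have "(\<Sum>i<n. \<Sum>j<n. Avg ?C n \<rho>' \<rho> (Eu n i j) $$ (i,j)) = (\<Sum>g\<in>?C. mtr (\<rho>' g) * mtr (Ri \<rho> n g))"
    by (rule Avg_trace[OF rep rep' inv])
  also have "\<dots> = (\<Sum>g\<in>?C. mtr (\<rho> g) * mtr (Ri \<rho> n g))" using treq by simp
  also have "\<dots> = (\<Sum>i<n. \<Sum>j<n. Avg ?C n \<rho> \<rho> (Eu n i j) $$ (i,j))"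
    by (rule Avg_trace[OF rep rep inv, symmetric])
  also have "\<dots> = (\<Sum>i<n. \<Sum>j<n. if i = j then of_nat (card ?C) / of_nat n else 0)"
    by (intro sum.cong refl) (simp add: Avg_self[OF irr inv bij])
  also have "\<dots> = (\<Sum>i<n. of_nat (card ?C) / of_nat n)" by (simp add: sum.delta)
  also have "\<dots> = of_nat (card ?C)" using n0 by simp
  finally have sumnz: "(\<Sum>i<n. \<Sum>j<n. Avg ?C n \<rho>' \<rho> (Eu n i j) $$ (i,j)) \<noteq> 0" using cardC by simp
  then obtain i j where ij: "i < n" "j < n" "Avg ?C n \<rho>' \<rho> (Eu n i j) $$ (i,j) \<noteq> 0"
    by (metis (no_types, lifting) lessThan_iff sum.neutral)
  define M where "M = Avg ?C n \<rho>' \<rho> (Eu n i j)"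
  have Mc: "M \<in> carrier_mat n n" by (simp add: M_def Avg_carrier)
  have Mnz: "M \<noteq> 0\<^sub>m n n" using ij by (auto simp: M_def)
  have inter: "\<forall>g\<in>?C. M * \<rho> g = \<rho>' g * M"
    using Avg_inter[OF rep rep' inv bij Eu_carrier] by (simp add: M_def)
  have "invertible_mat M" by (rule schur_invertible[OF irr Mc _ inter Mnz]) (use c' in blast)
  then show ?thesis unfolding rep_iso_on_def using nn Mc inter by blast
qed

end
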